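(* There is an absolute constant $A \geq 1$ such that the following holds. Let $\mathbb{V} = \{(ay+b,y,t) : (y,t) \in \mathbb{R}^{2}\}$ with $a,b \in \mathbb{R}$ be a vertical plane, and define $\pi_{\mathbb{V}} \colon \mathbb{H} \to \mathbb{W}$ by $\pi_{\mathbb{V}}(x,y,t) = (y, t + \tfrac{1}{2}xy - \tfrac{1}{2}ay^{2} - by)$. Then $\pi_{\mathbb{V}}$ maps horizontal lines contained in $\mathbb{V}$ onto horizontal lines in $\mathbb{W}$, and $\pi_{\mathbb{V}}|_{\mathbb{V}} \colon (\mathbb{V},d) \to (\mathbb{W},d_{\mathrm{par}})$ is $A(1+|a|)$-bilipschitz.
   Context: $\mathbb{H}$ is $\mathbb{R}^{3}$ with group law $(x_{1},y_{1},t_{1}) \cdot (x_{2},y_{2},t_{2}) = (x_{1}+x_{2},y_{1}+y_{2},t_{1}+t_{2}+\tfrac{1}{2}(x_{1}y_{2}-x_{2}y_{1}))$ and metric $d(p,q) = \|q^{-1}\cdot p\|$ with $\|(x,y,t)\| = \max\{\sqrt{x^{2}+y^{2}},\sqrt{|t|}\}$. A horizontal line in $\mathbb{H}$ is a set $p \cdot \{(sa',sb',0) : s \in \mathbb{R}\}$ with $(a',b') \neq 0$. $\mathbb{W}$ is $\mathbb{R}^{2}$ with $d_{\mathrm{par}}((y,t),(\xi,\tau)) = \max\{|y-\xi|,|t-\tau|^{1/2}\}$; horizontal lines in $\mathbb{W}$ are the sets $\mathbb{R} \times \{t\}$. *)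

theory Defs
  imports "HOL-Analysis.Analysis"
begin

type_synonym hpt = "real \<times> real \<times> real"

definition hmult :: "hpt \<Rightarrow> hpt \<Rightarrow> hpt" where
  "hmult p q = (case p of (x1,y1,t1) \<Rightarrow> case q of (x2,y2,t2) \<Rightarrow>
     (x1 + x2, y1 + y2, t1 + t2 + (1/2) * (x1 * y2 - x2 * y1)))"

definition hinv :: "hpt \<Rightarrow> hpt" where
  "hinv p = (case p of (x,y,t) \<Rightarrow> (-x, -y, -t))"

definition hnorm :: "hpt \<Rightarrow> real" where
  "hnorm p = (case p of (x,y,t) \<Rightarrow> max (sqrt (x^2 + y^2)) (sqrt \<bar>t\<bar>))"

definition hdist :: "hpt \<Rightarrow> hpt \<Rightarrow> real" where
  "hdist p q = hnorm (hmult (hinv q) p)"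

definition horizontal_line_H :: "hpt set \<Rightarrow> bool" where
  "horizontal_line_H L \<longleftrightarrow> (\<exists>p a' b'. (a', b') \<noteq> (0, 0) \<and>
      L = {hmult p (s * a', s * b', 0) | s. s \<in> (UNIV :: real set)})"

definition dpar :: "real \<times> real \<Rightarrow> real \<times> real \<Rightarrow> real" where
  "dpar p q = (case p of (y,t) \<Rightarrow> case q of (\<xi>,\<tau>) \<Rightarrow> max \<bar>y - \<xi>\<bar> (sqrt \<bar>t - \<tau>\<bar>))"

definition horizontal_line_W :: "(real \<times> real) set \<Rightarrow> bool" where
  "horizontal_line_W L \<longleftrightarrow> (\<exists>t. L = UNIV \<times> {t})"

definition vplane :: "real \<Rightarrow> real \<Rightarrow> hpt set" where
  "vplane a b = {(a * y + b, y, t) | y t. True}"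

definition piV :: "real \<Rightarrow> real \<Rightarrow> hpt \<Rightarrow> real \<times> real" where
  "piV a b p = (case p of (x,y,t) \<Rightarrow>
     (y, t + (1/2) * x * y - (1/2) * a * y^2 - b * y))"

definition bilipschitz_on :: "real \<Rightarrow> 'a set \<Rightarrow> ('a \<Rightarrow> 'a \<Rightarrow> real) \<Rightarrow> ('b \<Rightarrow> 'b \<Rightarrow> real) \<Rightarrow> ('a \<Rightarrow> 'b) \<Rightarrow> bool" where
  "bilipschitz_on L S d d' f \<longleftrightarrow>
     (\<forall>p\<in>S. \<forall>q\<in>S. d p q / L \<le> d' (f p) (f q) \<and> d' (f p) (f q) \<le> L * d p q)"

end

theory Submission
  imports Defs
begin

lemma piV_V: "piV a b (a*y+b, y, t) = (y, t - b*y/2)"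
  by (simp add: piV_def power2_eq_square algebra_simps)

lemma hdist_V: "hdist (a*y+b, y, t) (a*e+b, e, s) =
   max (sqrt (1+a^2) * \<bar>y-e\<bar>) (sqrt \<bar>t - s - b*(y-e)/2\<bar>)"
proof -
  have 1: "(- (a*e+b) + (a*y+b))^2 + (- e + y)^2 = (1+a^2) * (y-e)^2"
    by (simp add: power2_eq_square algebra_simps)
  have 2: "- s + t + 1/2 * (-(a*e+b) * y - (a*y+b) * (-e)) = t - s - b*(y-e)/2"
    by (simp add: field_simps)
  show ?thesis
    unfolding hdist_def hinv_def hmult_def hnorm_def
    by (simp only: prod.case 1 2 real_sqrt_mult real_sqrt_abs)
qed

lemma dpar_V: "dpar (piV a b (a*y+b, y, t)) (piV a b (a*e+b, e, s)) =
   max \<bar>y-e\<bar> (sqrt \<bar>t - s - b*(y-e)/2\<bar>)"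
proof -
  have "t - b*y/2 - (s - b*e/2) = t - s - b*(y-e)/2" by (simp add: field_simps)
  then show ?thesis unfolding piV_V dpar_def by (simp only: prod.case)
qed

lemma csq: "1 \<le> sqrt (1+a^2)" "sqrt (1+a^2) \<le> 1 + \<bar>a\<bar>"
proof -
  show "1 \<le> sqrt (1+a^2)" by simp
  have "1 + a^2 \<le> (1+\<bar>a\<bar>)^2" by (simp add: power2_eq_square algebra_simps)
  then have "sqrt (1+a^2) \<le> sqrt ((1+\<bar>a\<bar>)^2)" using real_sqrt_le_mono by blast
  then show "sqrt (1+a^2) \<le> 1 + \<bar>a\<bar>" by simp
qed

lemma bil: "bilipschitz_on (1 * (1 + \<bar>a\<bar>)) (vplane a b) hdist dpar (piV a b)"
  unfolding bilipschitz_on_def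
proof (intro ballI)
  fix p q assume "p \<in> vplane a b" "q \<in> vplane a b"
  then obtain y t e s where p: "p = (a*y+b, y, t)" and q: "q = (a*e+b, e, s)"
    unfolding vplane_def by blast
  define c where "c = sqrt (1+a^2)"
  define u where "u = \<bar>y-e\<bar>"
  define v where "v = sqrt \<bar>t - s - b*(y-e)/2\<bar>"
  define L where "L = 1 + \<bar>a\<bar>"
  have c1: "1 \<le> c" "c \<le> L" using csq c_def L_def by auto
  have u0: "u \<ge> 0" "v \<ge> 0" using u_def v_def by auto
  have cu: "u \<le> c*u" "c*u \<le> L*u" using c1 u0 mult_right_mono[of 1 c u] mult_right_mono[of c L u] by auto
  have lv: "v \<le> L * v" using c1 u0 mult_right_mono[of 1 L v] by auto
  have h: "hdist p q = max (c*u) v" unfolding p q hdist_V c_def u_def v_def ..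
  have d: "dpar (piV a b p) (piV a b q) = max u v" unfolding p q dpar_V u_def v_def ..
  have Lp: "L > 0" using L_def by auto
  have A: "max (c*u) v \<le> L * max u v"
    using cu lv u0 c1 by (smt (verit) mult_left_mono)
  have B: "max u v \<le> L * max (c*u) v"
    using cu lv u0 c1 by (smt (verit) mult_left_mono mult_right_mono)
  show "hdist p q / (1 * (1 + \<bar>a\<bar>)) \<le> dpar (piV a b p) (piV a b q) \<and>
        dpar (piV a b p) (piV a b q) \<le> 1 * (1 + \<bar>a\<bar>) * hdist p q"
    unfolding h d L_def[symmetric] using A B Lp by (simp add: divide_le_eq mult.commute)
qed

lemma lines: "horizontal_line_H L \<and> L \<subseteq> vplane a b \<Longrightarrow> horizontal_line_W (piV a b ` L)"
proof -
  assume as: "horizontal_line_H L \<and> L \<subseteq> vplane a b"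
  then obtain p a' b' where ne: "(a', b') \<noteq> (0, 0)" and
    Ld: "L = {hmult p (s * a', s * b', 0) | s. s \<in> (UNIV :: real set)}"
    unfolding horizontal_line_H_def by blast
  obtain x0 y0 t0 where p: "p = (x0, y0, t0)" by (cases p) auto
  have mem: "\<And>s. (x0 + s*a', y0 + s*b', t0 + 1/2*(x0*(s*b') - s*a'*y0)) \<in> vplane a b"
    using as Ld p by (auto simp: hmult_def)
  have eq: "\<And>s. x0 + s*a' = a*(y0+s*b') + b"
    using mem unfolding vplane_def by auto
  have x0: "x0 = a*y0 + b" using eq[of 0] by simp
  have a': "a' = a*b'" using eq[of 1] x0 by (simp add: algebra_simps)
  have b': "b' \<noteq> 0" using ne a' by auto
  have img: "\<And>s. piV a b (hmult p (s * a', s * b', 0)) = (y0 + s*b', t0 - b*y0/2)"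
    unfolding p hmult_def piV_def x0 a' by (simp add: power2_eq_square field_simps)
  have "piV a b ` L = UNIV \<times> {t0 - b*y0/2}"
  proof
    show "piV a b ` L \<subseteq> UNIV \<times> {t0 - b*y0/2}" using img Ld by auto
  next
    show "UNIV \<times> {t0 - b*y0/2} \<subseteq> piV a b ` L"
    proof
      fix z assume "z \<in> (UNIV::real set) \<times> {t0 - b*y0/2}"
      then obtain w where z: "z = (w, t0 - b*y0/2)" by auto
      define s where "s = (w - y0)/b'"
      have "y0 + s*b' = w" using b' s_def by simp
      then have "z = piV a b (hmult p (s * a', s * b', 0))" using img z by simp
      then show "z \<in> piV a b ` L" using Ld by blast
    qed
  qed
  then show ?thesis unfolding horizontal_line_W_def by blast
qed

theorem lemma4p13:
  shows "\<exists>A::real. A \<ge> 1 \<and> (\<forall>a b::real.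
     (\<forall>L. horizontal_line_H L \<and> L \<subseteq> vplane a b \<longrightarrow> horizontal_line_W (piV a b ` L)) \<and>
     bilipschitz_on (A * (1 + \<bar>a\<bar>)) (vplane a b) hdist dpar (piV a b))"
  using lines bil by (intro exI[of _ 1]) auto

end
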